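(* For all reals $x\ge D\ge 0$, \[ \sum_{d\le \min(D,\,x/10^{12})}\frac{\mu^2(d)\varphi(d)}{d^{2}\log(x/d)^2}\,g_1(d)^2\le 0.047. \]
   Context: $\mu$ is the Möbius function, $\varphi$ Euler's totient, $d$ ranges over positive integers (an empty sum is $0$). Let $\xi=1-1/(12\log 10)$. $g_1$ is the multiplicative function defined on primes by $g_1(2)=2.06$ and $g_1(p)=p^\xi/(p^\xi-1)$ for $p\ge 3$. *)

theory Defs
  imports "HOL-Number_Theory.Number_Theory" "HOL-Computational_Algebra.Squarefree"
begin

definition moebius_mu :: "nat \<Rightarrow> int" where
  "moebius_mu d = (if squarefree d then (-1) ^ card (prime_factors d) else 0)"

definition xi :: real where
  "xi = 1 - 1 / (12 * ln 10)"

definition g1_prime :: "nat \<Rightarrow> real" where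
  "g1_prime p = (if p = 2 then 2.06 else real p powr xi / (real p powr xi - 1))"

text \<open>Multiplicative function determined by its values at primes; only its
values on squarefree arguments matter below, where it is the product over
the prime factors.\<close>
definition g1 :: "nat \<Rightarrow> real" where
  "g1 d = (\<Prod>p\<in>prime_factors d. g1_prime p)"

end

theory Submission
  imports Defs
begin

lemma sq_step: "0 \<le> (x::real) \<Longrightarrow> x \<le> a \<Longrightarrow> a * a \<le> b \<Longrightarrow> x ^ 2 \<le> b"
  by (metis mult_mono order_trans power2_eq_square)

lemma ln10_ge: "(9/4::real) \<le> ln 10"
proof -
  define r where "r = exp (9/256::real)"
  have "r \<le> 1 + 9/256 + (9/256)^2" unfolding r_def by (rule exp_bound) auto
  hence r1: "r \<le> 10364/10000" by (simp add: power2_eq_square)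
  have r0: "0 \<le> r" unfolding r_def by simp
  have s1: "r^2 \<le> 5371/5000" by (rule sq_step[OF r0 r1]) simp
  have s2: "(r^2)^2 \<le> 577/500" by (rule sq_step[OF _ s1]) auto
  have s3: "((r^2)^2)^2 \<le> 6659/5000" by (rule sq_step[OF _ s2]) auto
  have s4: "(((r^2)^2)^2)^2 \<le> 17737/10000" by (rule sq_step[OF _ s3]) auto
  have s5: "((((r^2)^2)^2)^2)^2 \<le> 31461/10000" by (rule sq_step[OF _ s4]) auto
  have "(((((r^2)^2)^2)^2)^2)^2 \<le> 4949/500" by (rule sq_step[OF _ s5]) auto
  hence "r ^ 64 \<le> 10" by (simp add: power_mult[symmetric])
  hence "exp (real 64 * (9/256::real)) \<le> 10" unfolding r_def by (subst exp_of_nat_mult) 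
  hence "exp (9/4::real) \<le> exp (ln 10)" by simp
  thus ?thesis by (subst (asm) exp_le_cancel_iff)
qed

definition alpha :: real where "alpha = 1/(12*ln 10)"

lemma ln10_pos: "0 < ln (10::real)" by simp

lemma alpha_pos: "0 < alpha" unfolding alpha_def by simp
lemma alpha_le: "alpha \<le> 1/27"
  unfolding alpha_def using ln10_ge by (simp add: field_simps)

lemma xi_eq: "xi = 1 - alpha" unfolding xi_def alpha_def by simp

lemma powr_alpha_le:
  fixes n :: real and j k :: nat
  assumes "1 \<le> n" "0 < j" "n ^ j \<le> 10 ^ k"
  shows "n powr alpha \<le> exp (real k / (12 * real j))"
proof -
  have "ln (n ^ j) \<le> ln (10 ^ k)" using assms by (subst ln_le_cancel_iff) auto
  hence "real j * ln n \<le> real k * ln 10" using assms by (simp add: ln_realpow)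
  hence "alpha * ln n \<le> real k / (12 * real j)"
    unfolding alpha_def using assms ln10_pos by (simp add: field_simps)
  thus ?thesis using assms by (simp add: powr_def)
qed

definition bnd :: "real \<Rightarrow> real \<Rightarrow> real" where
 "bnd E n = ((1 - 1/n)/(1 - E/n)^2 - 1)/n"

lemma bnd_mono:
  assumes "0 \<le> E" "E \<le> E'" "E' < n" "1 \<le> n"
  shows "bnd E n \<le> bnd E' n"
proof -
  have n: "0 < n" using assms by linarith
  have "0 < 1 - E'/n" using assms n by (simp add: field_simps)
  moreover have "1 - E'/n \<le> 1 - E/n" using assms n by (simp add: divide_right_mono)
  ultimately have "(1 - E'/n)^2 \<le> (1 - E/n)^2" by (intro power_mono) auto
  moreover have "0 < (1 - E'/n)^2" using \<open>0 < 1 - E'/n\<close> by (rule zero_less_power)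
  moreover have "0 \<le> 1 - 1/n" using assms n by (simp add: field_simps)
  ultimately have "(1 - 1/n)/(1 - E/n)^2 \<le> (1 - 1/n)/(1 - E'/n)^2"
    using zero_less_power[of "1 - E/n" 2] \<open>0 < 1 - E'/n\<close> \<open>1 - E'/n \<le> 1 - E/n\<close>
    by (intro divide_left_mono mult_pos_pos) auto
  thus ?thesis unfolding bnd_def using n by (simp add: divide_right_mono)
qed

lemma bnd_nonneg:
  assumes "1 \<le> E" "E < n"
  shows "0 \<le> bnd E n"
proof -
  have n: "1 < n" using assms by linarith
  have a: "0 < 1 - E/n" using assms n by (simp add: field_simps)
  have b: "1 - E/n \<le> 1 - 1/n" using assms n by (simp add: divide_right_mono)
  have "(1 - E/n)^2 \<le> (1 - 1/n)^2" using a b by (intro power_mono) auto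
  also have "\<dots> \<le> 1 - 1/n" using n by (simp add: power2_eq_square field_simps)
  finally have "1 \<le> (1 - 1/n)/(1 - E/n)^2" using zero_less_power[OF a, of 2] by (simp add: le_divide_eq)
  thus ?thesis unfolding bnd_def using n by simp
qed

definition w :: "nat \<Rightarrow> real" where
  "w p = (1 - 1/real p) * (g1_prime p)^2 / real p"

definition kk :: "nat \<Rightarrow> real" where
  "kk p = (if p = 2 \<or> p = 3 then w p else w p - 1/real p)"

lemma g1_prime_eq:
  assumes "2 \<le> p" "p \<noteq> 2"
  shows "g1_prime p = 1/(1 - real p powr alpha / real p)"
proof -
  define a where "a = real p powr alpha"
  have p: "1 < real p" using assms by simp
  have a0: "0 < a" unfolding a_def using p by simp
  have ap: "a < real p" unfolding a_def using powr_less_mono[of alpha 1 "real p"] p alpha_le by simp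
  have pxi: "real p powr xi = real p / a" unfolding xi_eq a_def using p by (simp add: powr_diff)
  have "g1_prime p = (real p/a)/(real p/a - 1)" using assms pxi by (simp add: g1_prime_def)
  also have "\<dots> = 1/(1 - a/real p)" using a0 ap p by (simp add: field_simps)
  finally show ?thesis unfolding a_def .
qed


lemma prime_ge2: "prime (p::nat) \<Longrightarrow> 2 \<le> p" by (rule prime_ge_2_nat)

lemma palpha_ge1: "1 \<le> real p \<Longrightarrow> 1 \<le> real p powr alpha"
  using alpha_pos by (simp add: ge_one_powr_ge_zero)

lemma palpha_lt: "1 < real p \<Longrightarrow> real p powr alpha < real p"
  using powr_less_mono[of alpha 1 "real p"] alpha_le by simp

lemma kk_eq:
  assumes "prime p" "5 \<le> p"
  shows "kk p = bnd (real p powr alpha) (real p)"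
proof -
  define a where "a = real p powr alpha"
  have p: "5 \<le> real p" using assms by simp
  have ap: "a < real p" unfolding a_def using palpha_lt p by simp
  have a1: "1 \<le> a" unfolding a_def using palpha_ge1 p by simp
  have nz: "1 - a/real p \<noteq> 0" using ap p by (simp add: field_simps)
  have g: "g1_prime p = 1/(1 - a/real p)" unfolding a_def
    using g1_prime_eq[of p] assms prime_ge2 by auto
  have e: "\<And>c u P::real. c * (1/u)^2 / P - 1/P = (c/u^2 - 1)/P"
    by (simp add: power_one_over diff_divide_distrib)
  show ?thesis using assms unfolding kk_def w_def bnd_def g a_def[symmetric]
    by (simp add: e)
qed

lemma not_prime_4: "\<not> prime (4::nat)"
  using prime_product[of "2::nat" 2] by auto

lemma kk_nonneg:
  assumes "prime p" shows "0 \<le> kk p"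
proof (cases "p = 2 \<or> p = 3")
  case True
  thus ?thesis using assms prime_ge2[OF assms] unfolding kk_def w_def by auto
next
  case False
  hence "5 \<le> p" using prime_ge2[OF assms] assms
  proof -
    have "p \<noteq> 4" using not_prime_4 assms by auto
    thus ?thesis using False prime_ge2[OF assms] by linarith
  qed
  thus ?thesis using kk_eq[OF assms] bnd_nonneg palpha_ge1 palpha_lt by simp
qed

lemma exp12: "exp (1/12::real) \<le> 157/144"
  using exp_bound[of "1/12::real"] by (simp add: power2_eq_square)
lemma exp6: "exp (1/6::real) \<le> 43/36"
  using exp_bound[of "1/6::real"] by (simp add: power2_eq_square)
lemma exp24: "exp (1/24::real) \<le> 601/576"
  using exp_bound[of "1/24::real"] by (simp add: power2_eq_square)

lemma kk_small10:
  assumes "prime p" "5 \<le> p" "p \<le> 10"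
  shows "kk p \<le> bnd (157/144) (real p)"
proof -
  have "real p powr alpha \<le> exp (real 1 / (12 * real 1))"
    using assms by (intro powr_alpha_le) auto
  hence "real p powr alpha \<le> 157/144" using exp12 by simp
  moreover have "1 \<le> real p powr alpha" using palpha_ge1 assms by simp
  ultimately have "bnd (real p powr alpha) (real p) \<le> bnd (157/144) (real p)"
    using assms by (intro bnd_mono) auto
  thus ?thesis using kk_eq[OF assms(1,2)] by simp
qed

lemma kk_small100:
  assumes "prime p" "5 \<le> p" "p \<le> 100"
  shows "kk p \<le> bnd (43/36) (real p)"
proof -
  have "real p powr alpha \<le> exp (real 2 / (12 * real 1))"
    using assms by (intro powr_alpha_le) auto
  hence "real p powr alpha \<le> 43/36" using exp6 by simp
  moreover have "1 \<le> real p powr alpha" using palpha_ge1 assms by simp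
  ultimately have "bnd (real p powr alpha) (real p) \<le> bnd (43/36) (real p)"
    using assms by (intro bnd_mono) auto
  thus ?thesis using kk_eq[OF assms(1,2)] by simp
qed

lemma kk2: "kk 2 = 10609/10000"
  unfolding kk_def w_def g1_prime_def by (simp add: power2_eq_square)

lemma kk3: "kk 3 \<le> 5225/10000"
proof -
  define a where "a = real 3 powr alpha"
  have "a \<le> exp (real 1 / (12 * real 2))" unfolding a_def by (intro powr_alpha_le) auto
  hence a1: "a \<le> 601/576" using exp24 by simp
  have a0: "0 \<le> a" unfolding a_def by simp
  have g: "g1_prime 3 = 1/(1 - a/3)" unfolding a_def using g1_prime_eq[of 3] by simp
  have u: "1127/1728 \<le> 1 - a/3" using a1 by simp
  hence "(1127/1728)^2 \<le> (1 - a/3)^2" by (intro power_mono) auto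
  moreover have up: "0 < (1 - a/3)^2" using u by simp
  ultimately have "1/(1 - a/3)^2 \<le> 1/(1127/1728)^2" by (intro divide_left_mono mult_pos_pos) auto
  hence "kk 3 \<le> (2/9) * (1/(1127/1728)^2)"
    unfolding kk_def w_def g by (simp add: power_one_over)
  also have "\<dots> \<le> 5225/10000" by (simp add: power2_eq_square)
  finally show ?thesis .
qed

lemma tail_alg:
  fixes q Q n :: real
  assumes "0 \<le> q" "q \<le> Q" "Q < 1" "1 \<le> n"
  shows "((1 - 1/n)/(1-q)^2 - 1)/n \<le> 2*q/((1-Q)^2 * n)"
proof -
  have q1: "0 < 1 - q" using assms by simp
  have h1: "(1 - 1/n)/(1-q)^2 \<le> 1/(1-q)^2" using assms q1
    by (intro divide_right_mono) auto
  have h2a: "1/(1-q)^2 - 1 = (1 - (1-q)^2)/(1-q)^2" using q1 by (simp add: diff_divide_distrib)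
  have h2b: "1 - (1-q)^2 = q*(2-q)" by (simp add: power2_eq_square algebra_simps)
  have h2: "1/(1-q)^2 - 1 = q*(2-q)/(1-q)^2" using h2a h2b by simp
  have h3: "q*(2-q) \<le> 2*q" using assms by (simp add: algebra_simps)
  have h4: "(1-Q)^2 \<le> (1-q)^2" using assms by (intro power_mono) auto
  have "q*(2-q)/(1-q)^2 \<le> 2*q/(1-q)^2" using h3 q1 by (intro divide_right_mono) auto
  also have "\<dots> \<le> 2*q/(1-Q)^2" using h4 assms by (intro divide_left_mono) auto
  finally have "((1 - 1/n)/(1-q)^2 - 1) \<le> 2*q/(1-Q)^2" using h1 h2 by linarith
  hence "((1 - 1/n)/(1-q)^2 - 1)/n \<le> (2*q/(1-Q)^2)/n" using assms by (intro divide_right_mono) auto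
  thus ?thesis by simp
qed

lemma gen2: "(s::real) \<noteq> 0 \<Longrightarrow> K \<noteq> 0 \<Longrightarrow> P \<noteq> 0 \<Longrightarrow> 2*(c/s)/(K*P) = (2*c/K)/(P*s)"
  by (simp add: field_simps)

lemma kk_tail:
  assumes "prime p" "100 < p"
  shows "kk p \<le> 2448/10000 / (real p * sqrt (real p))"
proof -
  define a where "a = real p powr alpha"
  have p: "100 < real p" using assms by simp
  have sp: "10 \<le> sqrt (real p)" using p real_sqrt_le_mono[of 100 "real p"] by simp
  have "real p powr (alpha - 1/2) \<le> 100 powr (alpha - 1/2)"
    using p alpha_le by (intro powr_mono2') auto
  also have "\<dots> = 100 powr alpha / 10"
    by (simp add: powr_diff powr_half_sqrt)
  also have "100 powr alpha \<le> exp (real 2 / (12 * real 1))"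
    by (intro powr_alpha_le) auto
  finally have "real p powr (alpha - 1/2) \<le> (43/36)/10" using exp6 by simp
  hence "a / sqrt (real p) \<le> 43/360" unfolding a_def using p
    by (simp add: powr_diff powr_half_sqrt)
  moreover have sp0: "0 < sqrt (real p)" using sp by linarith
  ultimately have aq: "a \<le> 43/360 * sqrt (real p)" using pos_divide_le_eq[of "sqrt (real p)" a "43/360"] by simp
  define q where "q = a / real p"
  have pp: "sqrt (real p) * sqrt (real p) = real p" by simp
  have gen: "\<And>c s::real. 0 < s \<Longrightarrow> (c*s)/(s*s) = c/s" by (simp add: field_simps)
  have "q \<le> (43/360 * sqrt (real p)) / real p" unfolding q_def using aq p by (intro divide_right_mono) auto
  also have "(43/360 * sqrt (real p)) / real p = 43/360 / sqrt (real p)"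
    using gen[OF sp0, of "43/360"] unfolding pp .
  finally have q1: "q \<le> 43/360 / sqrt (real p)" .
  have "43/360 / sqrt (real p) \<le> 43/360 / 10" by (rule divide_left_mono) (use sp sp0 in auto)
  hence q2: "q \<le> 43/3600" using q1 by simp
  have q0: "0 \<le> q" unfolding q_def a_def by simp
  have "kk p = bnd a (real p)" unfolding a_def using kk_eq assms by simp
  also have "\<dots> = ((1 - 1/real p)/(1-q)^2 - 1)/real p" unfolding bnd_def q_def ..
  also have "\<dots> \<le> 2*q/((1-43/3600)^2 * real p)" using q0 q2 p by (intro tail_alg) auto
  also have "\<dots> \<le> 2*(43/360 / sqrt (real p))/((1-43/3600)^2 * real p)"
    using q1 p by (intro divide_right_mono) auto
  also have "\<dots> = (2*(43/360)/(1-43/3600)^2) / (real p * sqrt (real p))"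
    by (rule gen2) (use sp0 p in auto)
  also have "\<dots> \<le> 2448/10000 / (real p * sqrt (real p))"
    using p sp by (intro divide_right_mono) (auto simp: power2_eq_square)
  finally show ?thesis .
qed

lemma odd_tele:
  fixes n :: real assumes "3 \<le> n"
  shows "1/(n * sqrt n) \<le> 1/sqrt (n-2) - 1/sqrt n"
proof -
  define a b where "a = sqrt (n-2)" and "b = sqrt n"
  have a0: "0 < a" unfolding a_def using assms by simp
  have ab: "a \<le> b" unfolding a_def b_def using assms by simp
  have b2: "b^2 = n" "a^2 = n - 2" unfolding a_def b_def using assms by simp_all
  have b0: "0 < b" using a0 ab by simp
  have e1: "b^2 - a^2 = (b-a)*(a+b)" by (simp add: power2_eq_square algebra_simps)
  have "1/a - 1/b = (b-a)/(a*b)" using a0 b0 by (simp add: field_simps)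
  also have "\<dots> = ((b-a)*(a+b))/(a*b*(a+b))" using a0 b0 by simp
  also have "\<dots> = (b^2 - a^2)/(a*b*(a+b))" using e1 by simp
  finally have "1/a - 1/b = (b^2 - a^2)/(a*b*(a+b))" .
  hence c1: "1/a - 1/b = 2/(a*b*(a+b))" using b2 by simp
  have m: "a*b*(a+b) \<le> b*b*(b+b)" using a0 ab b0
    by (intro mult_mono) (auto intro: mult_mono)
  have "0 < a*b*(a+b)" using a0 b0 by simp
  hence c2: "2/(b*b*(b+b)) \<le> 2/(a*b*(a+b))" using m
    by (intro divide_left_mono) auto
  have bb: "b*b = n" using b2 by (simp add: power2_eq_square)
  have c3: "2/(b*b*(b+b)) = 1/(n * b)" unfolding bb[symmetric] using b0 by (simp add: field_simps)
  have "1/(n*b) \<le> 1/a - 1/b" using c1 c2 c3 by linarith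
  thus ?thesis unfolding a_def b_def .
qed


lemma deriv_phi:
  fixes lX z :: real
  assumes "0 < z"
  shows "DERIV (\<lambda>z. - (z * (lX - ln z)^2)) z :> (- ((lX - ln z)^2 - 2*(lX - ln z)))"
proof -
  have "DERIV (\<lambda>z. - (z * (lX - ln z)^2)) z :> - (1 * (lX - ln z)^2 + z * (of_nat 2 * (lX - ln z)^(2-1) * (0 - inverse z)))"
    using assms by (intro derivative_eq_intros) auto
  moreover have "- (1 * (lX - ln z)^2 + z * (of_nat 2 * (lX - ln z)^(2-1) * (0 - inverse z))) = (- ((lX - ln z)^2 - 2*(lX - ln z)))"
    using assms by (simp add: field_simps)
  ultimately show ?thesis by metis
qed

lemma deriv_u:
  fixes lX z :: real
  assumes "0 < z" "lX - ln z \<noteq> 0"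
  shows "DERIV (\<lambda>z. 1 / (lX - ln z)) z :> 1/(z * (lX - ln z)^2)"
proof -
  have "DERIV (\<lambda>z. 1 / (lX - ln z)) z :> (0 * (lX - ln z) - 1 * (0 - 1/z)) / ((lX - ln z) * (lX - ln z))"
    using assms by (intro derivative_eq_intros) auto
  moreover have "(0 * (lX - ln z) - 1 * (0 - 1/z)) / ((lX - ln z) * (lX - ln z)) = 1/(z * (lX - ln z)^2)"
    using assms by (simp add: field_simps power2_eq_square)
  ultimately show ?thesis by metis
qed
lemma cop_prime: assumes "prime (p::nat)" shows "coprime n p \<longleftrightarrow> \<not> p dvd n"
proof
  assume c: "coprime n p"
  show "\<not> p dvd n"
  proof
    assume "p dvd n"
    hence "is_unit p" using coprime_common_divisor[OF c] by auto
    thus False using assms by (simp add: not_prime_unit)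
  qed
next
  assume "\<not> p dvd n" thus "coprime n p" using prime_imp_coprime[OF assms] by (simp add: coprime_commute)
qed

lemma cop6: "coprime (n::nat) 6 \<longleftrightarrow> \<not> 2 dvd n \<and> \<not> 3 dvd n"
proof -
  have "coprime n 6 \<longleftrightarrow> coprime n (2*3)" by simp
  also have "\<dots> \<longleftrightarrow> coprime n 2 \<and> coprime n 3" by (rule coprime_mult_right_iff)
  finally show ?thesis using cop_prime[of 2 n] cop_prime[of 3 n] by simp
qed

lemma phi_mono:
  fixes lX s t :: real
  assumes "0 < s" "s \<le> t" "2 \<le> lX - ln t"
  shows "s * (lX - ln s)^2 \<le> t * (lX - ln t)^2"
proof -
  have "- (s * (lX - ln s)^2) \<ge> - (t * (lX - ln t)^2)"
  proof (rule DERIV_nonpos_imp_nonincreasing[where f = "\<lambda>z. - (z * (lX - ln z)^2)"])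
    show "s \<le> t" by fact
    fix x assume x: "s \<le> x" "x \<le> t"
    hence x0: "0 < x" using assms by simp
    have "ln x \<le> ln t" using x x0 by simp
    hence l: "2 \<le> lX - ln x" using assms by simp
    have "0 \<le> (lX - ln x) * ((lX - ln x) - 2)" using l by simp
    hence "- ((lX - ln x)^2 - 2*(lX - ln x)) \<le> 0" by (simp add: power2_eq_square algebra_simps)
    thus "\<exists>y. DERIV (\<lambda>z. - (z * (lX - ln z)^2)) x :> y \<and> y \<le> 0"
      using deriv_phi[OF x0, of lX] by blast
  qed
  thus ?thesis by simp
qed

lemma step_bound:
  fixes lX a n :: real
  assumes a: "1 \<le> a" and an: "a + 3 \<le> n" and l: "2 \<le> lX - ln n"
  shows "3 * (1/(n * (lX - ln n)^2)) \<le> 1/(lX - ln (a+3)) - 1/(lX - ln a)"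
proof -
  have der: "DERIV (\<lambda>z. 1 / (lX - ln z)) x :> 1/(x * (lX - ln x)^2)" if "a \<le> x" "x \<le> a + 3" for x
  proof -
    have x0: "0 < x" using that a by simp
    have "ln x \<le> ln n" using that an x0 by simp
    hence "lX - ln x \<noteq> 0" using l by simp
    thus ?thesis using deriv_u[OF x0] by simp
  qed
  obtain z where z: "a < z" "z < a + 3"
    "1/(lX - ln (a+3)) - 1/(lX - ln a) = ((a+3) - a) * (1/(z * (lX - ln z)^2))"
    using MVT2[of a "a+3" "\<lambda>z. 1 / (lX - ln z)" "\<lambda>x. 1/(x * (lX - ln x)^2)"] der by auto
  have z0: "0 < z" using z a by simp
  have "z * (lX - ln z)^2 \<le> n * (lX - ln n)^2"
    using z0 z an l by (intro phi_mono) auto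
  moreover have "0 < z * (lX - ln z)^2"
  proof -
    have "ln z \<le> ln n" using z an z0 by simp
    hence "lX - ln z \<noteq> 0" using l by simp
    thus ?thesis using z0 by simp
  qed
  ultimately have "1/(n * (lX - ln n)^2) \<le> 1/(z * (lX - ln z)^2)"
    by (intro divide_left_mono) auto
  thus ?thesis using z(3) by simp
qed


lemma ln1e12: "27 \<le> ln ((10::real)^12)"
proof -
  have "ln ((10::real)^12) = real 12 * ln 10" by (rule ln_realpow)
  thus ?thesis using ln10_ge by linarith
qed

lemma ln_ge27: assumes "10^12 \<le> (y::real)" shows "27 \<le> ln y"
proof -
  have "ln ((10::real)^12) \<le> ln y" using assms by (subst ln_le_cancel_iff) auto
  thus ?thesis using ln1e12 by linarith
qed

lemma a1: "\<not> 2 dvd (n::nat) \<Longrightarrow> \<not> 3 dvd n \<Longrightarrow> n mod 6 = 1 \<or> n mod 6 = 5" by presburger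
lemma a2: "(n::nat) mod 6 = 1 \<Longrightarrow> 5 \<le> n \<Longrightarrow> n = 3 * ((n-4) div 3) + 4 \<and> odd ((n-4) div 3)" by presburger
lemma a3: "(n::nat) mod 6 = 5 \<Longrightarrow> 5 \<le> n \<Longrightarrow> n = 3 * ((n-4) div 3) + 5 \<and> even ((n-4) div 3)" by presburger
lemma j_inj_aux: assumes "\<not> 2 dvd (n::nat)" "\<not> 3 dvd n" "\<not> 2 dvd m" "\<not> 3 dvd m" "5 \<le> n" "5 \<le> m" "(n-4) div 3 = (m-4) div 3" shows "n = m"
proof -
  have n: "n mod 6 = 1 \<or> n mod 6 = 5" using a1 assms by blast
  have m: "m mod 6 = 1 \<or> m mod 6 = 5" using a1 assms by blast
  show ?thesis
  proof (cases "n mod 6 = 1")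
    case True
    note A = a2[OF True assms(5)]
    show ?thesis
    proof (cases "m mod 6 = 1")
      case True thus ?thesis using A a2[OF True assms(6)] assms(7) by simp
    next
      case False hence "m mod 6 = 5" using m by simp
      thus ?thesis using A a3[OF _ assms(6)] assms(7) by simp
    qed
  next
    case False hence F: "n mod 6 = 5" using n by simp
    note A = a3[OF F assms(5)]
    show ?thesis
    proof (cases "m mod 6 = 1")
      case True thus ?thesis using A a2[OF True assms(6)] assms(7) by simp
    next
      case False hence "m mod 6 = 5" using m by simp
      thus ?thesis using A a3[OF _ assms(6)] assms(7) by simp
    qed
  qed
qed

lemma jle_aux: "5 \<le> (n::nat) \<Longrightarrow> 3 * ((n - 4) div 3) + 4 \<le> n"
  by presburger

lemma lin3: "(a::real) \<le> b/3 \<Longrightarrow> c \<le> (d - b)/3 \<Longrightarrow> d \<le> e \<Longrightarrow> g = a \<Longrightarrow> g + c \<le> e/3"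
  by (simp add: field_simps)

lemma inner:
  fixes X N :: real
  assumes X: "0 < X" and N: "1 \<le> N" and XN: "10^12 * N \<le> X"
  shows "(\<Sum>n\<in>{n::nat. 1 \<le> n \<and> coprime n 6 \<and> real n \<le> N}. 1/(real n * (ln (X/real n))^2))
          \<le> 1/(3 * ln (X/N))"
proof -
  define lX where "lX = ln X"
  define u where "u t = 1/(lX - ln t)" for t
  define G where "G n = 1/(real n * (ln (X/real n))^2)" for n :: nat
  have LN: "27 \<le> ln (X/N)" using XN N by (intro ln_ge27) (simp add: field_simps)
  have lXN: "lX - ln N = ln (X/N)" unfolding lX_def using X N by (simp add: ln_div)
  have key: "27 \<le> lX - ln t" if "0 < t" "t \<le> N" for t
  proof -
    have "ln t \<le> ln N" using that by simp
    thus ?thesis using LN lXN by linarith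
  qed
  have umono: "u s \<le> u t" if "0 < s" "s \<le> t" "t \<le> N" for s t
  proof -
    have "ln s \<le> ln t" using that by simp
    moreover have "27 \<le> lX - ln t" using key that by simp
    ultimately show ?thesis unfolding u_def by (intro divide_left_mono) (auto intro: mult_pos_pos)
  qed
  define S5 where "S5 = {n::nat. 5 \<le> n \<and> coprime n 6 \<and> real n \<le> N}"
  have fin5: "finite S5"
  proof (rule finite_subset)
    show "S5 \<subseteq> {..nat \<lceil>N\<rceil>}"
    proof
      fix x assume "x \<in> S5"
      hence "real x \<le> N" unfolding S5_def by simp
      hence "int x \<le> \<lceil>N\<rceil>" using ceiling_mono[of "real x" N] by simp
      thus "x \<in> {..nat \<lceil>N\<rceil>}" by (simp add: le_nat_iff)
    qed
  qed auto
  have aux: "n = 1 \<or> 5 \<le> n" if "1 \<le> n" "coprime n 6" for n::nat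
  proof -
    have "\<not> 2 dvd n" "\<not> 3 dvd n" using that(2) cop6[of n] by auto
    thus ?thesis using that(1) by presburger
  qed
  have decomp: "{n::nat. 1 \<le> n \<and> coprime n 6 \<and> real n \<le> N} = insert 1 S5"
    unfolding S5_def using aux N by auto
  have not1: "1 \<notin> S5" unfolding S5_def by simp
  define j where "j n = (n - 4) div 3" for n :: nat
  have injj: "inj_on j S5"
  proof (rule inj_onI)
    fix n m assume nm: "n \<in> S5" "m \<in> S5" "j n = j m"
    have h1: "5 \<le> n" "coprime n 6" "5 \<le> m" "coprime m 6" using nm(1,2) unfolding S5_def by auto
    have "\<not> 2 dvd n" "\<not> 3 dvd n" "\<not> 2 dvd m" "\<not> 3 dvd m" "5 \<le> n" "5 \<le> m"
      using h1 cop6[of n] cop6[of m] by auto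
    moreover have "(n-4) div 3 = (m-4) div 3" using nm(3) unfolding j_def .
    ultimately show "n = m" by (rule j_inj_aux)
  qed
  define J where "J = nat \<lfloor>(N - 1)/3\<rfloor>"
  have jle: "3 * j n + 4 \<le> n" if "n \<in> S5" for n
  proof -
    have "5 \<le> n" using that unfolding S5_def by simp
    thus ?thesis unfolding j_def by (rule jle_aux)
  qed
  have jJ: "j n < J" if "n \<in> S5" for n
  proof -
    have "real (3 * j n + 4) \<le> N" using jle[OF that] that unfolding S5_def
      by (metis (mono_tags, lifting) mem_Collect_eq of_nat_le_iff order_trans)
    hence "real (j n + 1) \<le> (N - 1)/3" by simp
    hence "int (j n + 1) \<le> \<lfloor>(N - 1)/3\<rfloor>" by (simp add: le_floor_iff)
    thus ?thesis unfolding J_def by linarith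
  qed
  have J3: "real (3 * J + 1) \<le> N"
  proof -
    have "0 \<le> \<lfloor>(N - 1)/3\<rfloor>" using N by simp
    hence "real J = of_int \<lfloor>(N - 1)/3\<rfloor>" unfolding J_def by simp
    hence "real J \<le> (N - 1)/3" using of_int_floor_le[of "(N-1)/3"] by linarith
    thus ?thesis by simp
  qed
  define D where "D i = (u (real (3 * i + 4)) - u (real (3 * i + 1)))/3" for i :: nat
  have Dnn: "0 \<le> D i" if "i < J" for i
  proof -
    have "real (3 * i + 4) \<le> real (3 * J + 1)" using that by simp
    hence "real (3 * i + 4) \<le> N" using J3 by linarith
    thus ?thesis unfolding D_def using umono[of "real (3*i+1)" "real (3*i+4)"] by simp
  qed
  have Gb: "G n \<le> D (j n)" if "n \<in> S5" for n
  proof -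
    have n0: "0 < real n" "real n \<le> N" using that unfolding S5_def by auto
    have a3: "real (3 * j n + 1) + 3 \<le> real n" using jle[OF that] by simp
    have l: "2 \<le> lX - ln (real n)" using key[OF n0] by simp
    have stp: "3 * (1/(real n * (lX - ln (real n))^2)) \<le>
          1/(lX - ln (real (3 * j n + 1) + 3)) - 1/(lX - ln (real (3 * j n + 1)))"
      by (rule step_bound) (use a3 l in auto)
    have lnf: "ln (X / real n) = lX - ln (real n)" unfolding lX_def using X n0 by (simp add: ln_div)
    have eq4: "real (3 * j n + 1) + 3 = real (3 * j n + 4)" by simp
    have st: "3 * (1/(real n * (lX - ln (real n))^2)) \<le> u (real (3 * j n + 4)) - u (real (3 * j n + 1))"
      using stp unfolding u_def eq4 .
    have "G n = 1/(real n * (lX - ln (real n))^2)" unfolding G_def lnf ..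
    moreover have "\<And>a b c::real. a = c \<Longrightarrow> 3*c \<le> b \<Longrightarrow> a \<le> b/3" by simp
    ultimately show ?thesis unfolding D_def using st by blast
  qed
  define f where "f i = u (real (3 * i + 1))" for i :: nat
  have Df: "D i = (f (Suc i) - f i)/3" for i
  proof -
    have "3 * Suc i + 1 = 3 * i + 4" by simp
    thus ?thesis unfolding D_def f_def by (simp only:)
  qed
  have r1: "(\<Sum>n\<in>S5. G n) \<le> (\<Sum>n\<in>S5. D (j n))" by (intro sum_mono Gb)
  have r2: "(\<Sum>i\<in>j ` S5. D i) = (\<Sum>n\<in>S5. D (j n))" by (simp add: sum.reindex[OF injj])
  have r3: "(\<Sum>i\<in>j ` S5. D i) \<le> (\<Sum>i<J. D i)"
    by (rule sum_mono2) (use jJ Dnn in auto)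
  have r4: "(\<Sum>i<J. D i) = (f J - f 0)/3"
    unfolding Df by (simp only: sum_divide_distrib[symmetric] sum_lessThan_telescope)
  have s5: "(\<Sum>n\<in>S5. G n) \<le> (u (real (3 * J + 1)) - u 1)/3"
    using r1 r2 r3 r4 unfolding f_def by simp
  have uJ: "u (real (3 * J + 1)) \<le> u N" using umono J3 by simp
  have lX27: "27 \<le> lX" using key[of 1] N by simp
  have u1: "u 1 = 1/lX" unfolding u_def by simp
  have G1: "G 1 = (u 1)^2" unfolding G_def u_def lX_def by (simp add: power_one_over)
  have "(u 1)^2 \<le> u 1 / 3" unfolding u1 using lX27 by (simp add: power2_eq_square field_simps)
  hence "G 1 + (\<Sum>n\<in>S5. G n) \<le> u N / 3" using s5 uJ G1 lin3 by blast
  moreover have "u N = 1/ln (X/N)" unfolding u_def lXN ..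
  ultimately show ?thesis unfolding decomp using fin5 not1 by (simp add: G_def)
qed


definition bb :: "nat \<Rightarrow> real" where
  "bb n = (if n \<le> 10 then bnd (157/144) (real n) else bnd (43/36) (real n))"

lemma bbv: "bb 5 \<le> 61679/1000000"
  "bb 7 \<le> 28941/1000000"
  "bb 11 \<le> 13097/1000000"
  "bb 13 \<le> 9178/1000000"
  "bb 17 \<le> 5224/1000000"
  "bb 19 \<le> 4144/1000000"
  "bb 23 \<le> 2791/1000000"
  "bb 25 \<le> 2351/1000000"
  "bb 29 \<le> 1733/1000000"
  "bb 31 \<le> 1512/1000000"
  "bb 35 \<le> 1180/1000000"
  "bb 37 \<le> 1054/1000000"
  "bb 41 \<le> 855/1000000"
  "bb 43 \<le> 776/1000000"
  "bb 47 \<le> 648/1000000"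
  "bb 49 \<le> 595/1000000"
  "bb 53 \<le> 508/1000000"
  "bb 55 \<le> 471/1000000"
  "bb 59 \<le> 409/1000000"
  "bb 61 \<le> 382/1000000"
  "bb 65 \<le> 336/1000000"
  "bb 67 \<le> 316/1000000"
  "bb 71 \<le> 281/1000000"
  "bb 73 \<le> 266/1000000"
  "bb 77 \<le> 239/1000000"
  "bb 79 \<le> 227/1000000"
  "bb 83 \<le> 205/1000000"
  "bb 85 \<le> 196/1000000"
  "bb 89 \<le> 179/1000000"
  "bb 91 \<le> 171/1000000"
  "bb 95 \<le> 157/1000000"
  "bb 97 \<le> 150/1000000"
  by (simp_all add: bb_def bnd_def power2_eq_square)

lemma sumA: "(\<Sum>k<16. bb (6*k+5) + bb (6*k+7)) \<le> 1403/10000"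
  apply (simp add: lessThan_nat_numeral del: lessThan_Suc)
  using bbv by linarith

lemma prod_le_superset:
  fixes f :: "'a \<Rightarrow> real"
  assumes "finite B" "A \<subseteq> B" "\<And>x. x \<in> B \<Longrightarrow> 1 \<le> f x"
  shows "prod f A \<le> prod f B"
proof -
  have "prod f B = prod f (B - A) * prod f A" using assms by (simp add: prod.subset_diff)
  moreover have "1 \<le> prod f (B - A)" using assms by (intro prod_ge_1) auto
  moreover have "0 \<le> prod f A" using assms by (intro prod_nonneg) (auto intro: order_trans[OF zero_le_one])
  ultimately show ?thesis by (metis mult_right_mono mult_1 mult.commute mult_left_mono)
qed

lemma prod_le_exp_sum:
  fixes f :: "'a \<Rightarrow> real"
  assumes "finite A" "\<And>x. x \<in> A \<Longrightarrow> 0 \<le> f x"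
  shows "(\<Prod>x\<in>A. 1 + f x) \<le> exp (\<Sum>x\<in>A. f x)"
proof -
  have "(\<Prod>x\<in>A. 1 + f x) \<le> (\<Prod>x\<in>A. exp (f x))"
    by (rule prod_mono) (use assms in auto)
  also have "\<dots> = exp (\<Sum>x\<in>A. f x)" using assms by (simp add: exp_sum)
  finally show ?thesis .
qed

lemma prime_ge5: assumes "prime (p::nat)" "p \<noteq> 2" "p \<noteq> 3" shows "5 \<le> p"
proof -
  have "p \<noteq> 4" using not_prime_4 assms by auto
  thus ?thesis using assms prime_ge2[OF assms(1)] by linarith
qed

lemma m5: assumes "(p::nat) mod 6 = 5" "p \<le> 100" shows "p \<in> (\<lambda>k. 6*k+5) ` {..<16}"
proof (rule image_eqI[where x="p div 6"])
  show e: "p = 6 * (p div 6) + 5" using assms(1) by (metis div_mult_mod_eq mult.commute)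
  show "p div 6 \<in> {..<16}" using e assms(2) by simp
qed

lemma m1: assumes "(p::nat) mod 6 = 1" "p \<le> 100" "5 \<le> p" shows "p \<in> (\<lambda>k. 6*k+7) ` {..<16}"
proof (rule image_eqI[where x="p div 6 - 1"])
  have e: "p = 6 * (p div 6) + 1" using assms(1) by (metis div_mult_mod_eq mult.commute)
  moreover have "1 \<le> p div 6" using e assms(3) by linarith
  ultimately show "p = 6 * (p div 6 - 1) + 7" by (simp add: algebra_simps)
  show "p div 6 - 1 \<in> {..<16}" using e assms(2) by simp
qed

lemma sum_Un_le':
  fixes f :: "'a \<Rightarrow> real"
  assumes "finite A" "finite B" "\<And>x. x \<in> A \<union> B \<Longrightarrow> 0 \<le> f x"
  shows "sum f (A \<union> B) \<le> sum f A + sum f B"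
proof -
  have "0 \<le> sum f (A \<inter> B)" using assms by (intro sum_nonneg) auto
  thus ?thesis using sum_Un[OF assms(1,2), of f] by linarith
qed

lemma sumR1:
  assumes "finite R1" "\<And>p. p \<in> R1 \<Longrightarrow> prime p \<and> 5 \<le> p \<and> p \<le> 100"
  shows "(\<Sum>p\<in>R1. kk p) \<le> 1403/10000"
proof -
  define I5 where "I5 = (\<lambda>k::nat. 6*k+5) ` {..<16}"
  define I7 where "I7 = (\<lambda>k::nat. 6*k+7) ` {..<16}"
  have bbnn: "0 \<le> bb n" if "5 \<le> n" for n
    unfolding bb_def using that by (auto intro!: bnd_nonneg)
  have sub: "R1 \<subseteq> I5 \<union> I7"
  proof
    fix p assume pR: "p \<in> R1"
    hence p: "prime p" "5 \<le> p" "p \<le> 100" using assms by auto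
    have "\<not> 2 dvd p" using p prime_odd_nat[of p] by auto
    moreover have "\<not> 3 dvd p"
    proof
      assume "3 dvd p" hence "p = 3" using p by (metis prime_nat_iff numeral_eq_one_iff semiring_norm(86))
      thus False using p by simp
    qed
    ultimately have "p mod 6 = 1 \<or> p mod 6 = 5" by (rule a1)
    thus "p \<in> I5 \<union> I7" unfolding I5_def I7_def using m1 m5 p by blast
  qed
  have "(\<Sum>p\<in>R1. kk p) \<le> (\<Sum>p\<in>R1. bb p)"
  proof (rule sum_mono)
    fix p assume "p \<in> R1"
    hence p: "prime p" "5 \<le> p" "p \<le> 100" using assms by auto
    show "kk p \<le> bb p"
    proof (cases "p \<le> 10")
      case True thus ?thesis unfolding bb_def using kk_small10 p by simp
    next
      case False thus ?thesis unfolding bb_def using kk_small100 p by simp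
    qed
  qed
  also have "\<dots> \<le> (\<Sum>p\<in>I5 \<union> I7. bb p)"
    by (rule sum_mono2) (use sub bbnn in \<open>auto simp: I5_def I7_def\<close>)
  also have "\<dots> \<le> (\<Sum>p\<in>I5. bb p) + (\<Sum>p\<in>I7. bb p)"
    by (rule sum_Un_le') (use bbnn in \<open>auto simp: I5_def I7_def\<close>)
  also have "(\<Sum>p\<in>I5. bb p) \<le> (\<Sum>k<16. bb (6*k+5))"
    unfolding I5_def using sum_image_le[of "{..<16::nat}" bb "\<lambda>k. 6*k+5"] bbnn by (simp add: comp_def)
  also have "(\<Sum>p\<in>I7. bb p) \<le> (\<Sum>k<16. bb (6*k+7))"
    unfolding I7_def using sum_image_le[of "{..<16::nat}" bb "\<lambda>k. 6*k+7"] bbnn by (simp add: comp_def)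
  also have "(\<Sum>k<16. bb (6*k+5)) + (\<Sum>k<16. bb (6*k+7)) = (\<Sum>k<16. bb (6*k+5) + bb (6*k+7))"
    by (simp add: sum.distrib)
  also have "\<dots> \<le> 1403/10000" by (rule sumA)
  finally show ?thesis by simp
qed

lemma odd_form: "odd (p::nat) \<Longrightarrow> 101 \<le> p \<Longrightarrow> p = 2 * ((p - 101) div 2) + 101"
  by presburger

lemma sqrt99: "1/sqrt 99 \<le> (10/99::real)"
proof -
  have "99/10 \<le> sqrt (99::real)" by (rule real_le_rsqrt) (simp add: power2_eq_square)
  hence "1/sqrt 99 \<le> 1/(99/10::real)" by (intro divide_left_mono) auto
  thus ?thesis by simp
qed

lemma sumR2:
  fixes y :: real
  assumes "finite R2" "\<And>p. p \<in> R2 \<Longrightarrow> prime p \<and> 100 < p \<and> real p \<le> y"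
  shows "(\<Sum>p\<in>R2. kk p) \<le> 2448/10000 * (10/99)"
proof -
  define h where "h n = 1/(real n * sqrt (real n))" for n :: nat
  define g where "g i = 1/sqrt (real (2*i+99))" for i :: nat
  define M where "M = nat \<lceil>y\<rceil>"
  have hnn: "0 \<le> h n" for n unfolding h_def by simp
  have "(\<Sum>p\<in>R2. kk p) \<le> (\<Sum>p\<in>R2. 2448/10000 * h p)"
    by (rule sum_mono) (use assms kk_tail in \<open>auto simp: h_def\<close>)
  also have "\<dots> = 2448/10000 * (\<Sum>p\<in>R2. h p)" by (simp add: sum_distrib_left)
  also have "(\<Sum>p\<in>R2. h p) \<le> (\<Sum>p\<in>(\<lambda>i. 2*i+101) ` {..<M}. h p)"
  proof (rule sum_mono2)
    show "R2 \<subseteq> (\<lambda>i. 2*i+101) ` {..<M}"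
    proof
      fix p assume "p \<in> R2"
      hence p: "prime p" "100 < p" "real p \<le> y" using assms by auto
      have "odd p" using p prime_odd_nat[of p] by auto
      hence e: "p = 2 * ((p - 101) div 2) + 101" using p odd_form by auto
      have "int p \<le> \<lceil>y\<rceil>" using ceiling_mono[of "real p" y] p by simp
      hence "p \<le> M" unfolding M_def by (simp add: le_nat_iff)
      hence "(p - 101) div 2 < M" using e by linarith
      thus "p \<in> (\<lambda>i. 2*i+101) ` {..<M}" using e by blast
    qed
  qed (auto simp: hnn)
  also have "\<dots> \<le> (\<Sum>i<M. h (2*i+101))"
    using sum_image_le[of "{..<M}" h "\<lambda>i. 2*i+101"] hnn by (simp add: comp_def)
  also have "\<dots> \<le> (\<Sum>i<M. g i - g (Suc i))"
  proof (rule sum_mono)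
    fix i :: nat
    have A: "h (2*i+101) \<le> 1/sqrt (real (2*i+101) - 2) - 1/sqrt (real (2*i+101))"
      unfolding h_def by (rule odd_tele) simp
    have e1: "real (2*i+101) - 2 = real (2*i+99)" by simp
    have e2: "2 * Suc i + 99 = 2*i+101" by simp
    show "h (2*i+101) \<le> g i - g (Suc i)" unfolding g_def e2 using A unfolding e1 .
  qed
  also have "\<dots> = g 0 - g M" by (rule sum_lessThan_telescope')
  also have "\<dots> \<le> 10/99"
  proof -
    have "g 0 \<le> 10/99" unfolding g_def using sqrt99 by simp
    moreover have "0 \<le> g M" unfolding g_def by simp
    ultimately show ?thesis by linarith
  qed
  finally show ?thesis by simp
qed

lemma exp_small: "exp (1651/10000::real) \<le> 119/100"
proof -
  have "exp (1651/40000::real) \<le> 1 + 1651/40000 + (1651/40000)^2" by (rule exp_bound) auto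
  hence e: "exp (1651/40000::real) \<le> 1043/1000" by (simp add: power2_eq_square)
  have "exp (1651/40000::real) ^ 4 \<le> (1043/1000)^4" by (rule power_mono[OF e]) simp
  also have "\<dots> \<le> 119/100" by (simp add: eval_nat_numeral)
  finally have "exp (real 4 * (1651/40000::real)) \<le> 119/100" by (subst exp_of_nat_mult)
  thus ?thesis by simp
qed

lemma prod_bound:
  fixes y :: real
  shows "(\<Prod>p\<in>{p::nat. prime p \<and> real p \<le> y}. 1 + kk p) \<le> 374/100"
proof -
  define Py where "Py = {p::nat. prime p \<and> real p \<le> y}"
  have finPy: "finite Py"
  proof (rule finite_subset)
    show "Py \<subseteq> {..nat \<lceil>y\<rceil>}"
    proof
      fix x assume "x \<in> Py"
      hence "real x \<le> y" unfolding Py_def by simp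
      hence "int x \<le> \<lceil>y\<rceil>" using ceiling_mono[of "real x" y] by simp
      thus "x \<in> {..nat \<lceil>y\<rceil>}" by (simp add: le_nat_iff)
    qed
  qed auto
  define R where "R = Py - {2,3}"
  have finR: "finite R" unfolding R_def using finPy by simp
  have Rprime: "prime p \<and> p \<noteq> 2 \<and> p \<noteq> 3 \<and> real p \<le> y" if "p \<in> R" for p
    using that unfolding R_def Py_def by auto
  have ge1: "1 \<le> 1 + kk p" if "prime p" for p using kk_nonneg[OF that] by simp
  have A: "(\<Prod>p\<in>Py. 1 + kk p) \<le> (\<Prod>p\<in>insert 2 (insert 3 R). 1 + kk p)"
  proof (rule prod_le_superset)
    show "finite (insert 2 (insert 3 R))" using finR by simp
    show "Py \<subseteq> insert 2 (insert 3 R)" unfolding R_def by auto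
    fix x assume "x \<in> insert 2 (insert 3 R)"
    hence "prime x" using Rprime by auto
    thus "1 \<le> 1 + kk x" by (rule ge1)
  qed
  have B: "(\<Prod>p\<in>insert 2 (insert 3 R). 1 + kk p) = (1 + kk 2) * ((1 + kk 3) * (\<Prod>p\<in>R. 1 + kk p))"
  proof -
    have n2: "2 \<notin> insert 3 R" "3 \<notin> R" unfolding R_def by auto
    show ?thesis using finR n2 by simp
  qed
  have C: "(\<Prod>p\<in>R. 1 + kk p) \<le> exp (\<Sum>p\<in>R. kk p)"
    by (rule prod_le_exp_sum[OF finR]) (use Rprime kk_nonneg in auto)
  have D: "(\<Sum>p\<in>R. kk p) \<le> 1651/10000"
  proof -
    define R1 where "R1 = {p\<in>R. p \<le> 100}"
    define R2 where "R2 = {p\<in>R. 100 < p}"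
    have RU: "R = R1 \<union> R2" unfolding R1_def R2_def by auto
    have "(\<Sum>p\<in>R1 \<union> R2. kk p) \<le> (\<Sum>p\<in>R1. kk p) + (\<Sum>p\<in>R2. kk p)"
      by (rule sum_Un_le') (use finR Rprime kk_nonneg in \<open>auto simp: R1_def R2_def\<close>)
    hence "(\<Sum>p\<in>R. kk p) \<le> (\<Sum>p\<in>R1. kk p) + (\<Sum>p\<in>R2. kk p)" using RU by simp
    also have "(\<Sum>p\<in>R1. kk p) \<le> 1403/10000"
      by (rule sumR1) (use finR Rprime prime_ge5 in \<open>auto simp: R1_def\<close>)
    also have "(\<Sum>p\<in>R2. kk p) \<le> 2448/10000 * (10/99)"
      by (rule sumR2[of _ y]) (use finR Rprime in \<open>auto simp: R2_def\<close>)
    finally show ?thesis by simp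
  qed
  hence "exp (\<Sum>p\<in>R. kk p) \<le> 119/100" using exp_small by (meson exp_le_cancel_iff order_trans)
  hence PR: "(\<Prod>p\<in>R. 1 + kk p) \<le> 119/100" using C by linarith
  have PR0: "0 \<le> (\<Prod>p\<in>R. 1 + kk p)" using Rprime kk_nonneg by (intro prod_nonneg) (auto intro: add_nonneg_nonneg)
  have k3: "0 \<le> 1 + kk 3" using kk_nonneg[of 3] by simp
  have "(1 + kk 3) * (\<Prod>p\<in>R. 1 + kk p) \<le> (15225/10000) * (119/100)"
    using kk3 PR PR0 k3 by (intro mult_mono) auto
  moreover have "0 \<le> (1 + kk 3) * (\<Prod>p\<in>R. 1 + kk p)" using PR0 k3 by simp
  ultimately have "(1 + kk 2) * ((1 + kk 3) * (\<Prod>p\<in>R. 1 + kk p)) \<le> (1 + kk 2) * ((15225/10000) * (119/100))"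
    using kk2 by (intro mult_left_mono) auto
  also have "\<dots> \<le> 374/100" using kk2 by simp
  finally show ?thesis using A B unfolding Py_def by simp
qed


lemma sqf_prod:
  assumes "squarefree (d::nat)" "0 < d"
  shows "(\<Prod>p\<in>prime_factors d. p) = d"
proof -
  have m: "multiplicity p d = 1" if "p \<in> prime_factors d" for p
    using assms that squarefree_factorial_semiring'[of d] by auto
  have "d = (\<Prod>p\<in>prime_factors d. p ^ multiplicity p d)" by (rule prime_factorization_nat[OF assms(2)])
  also have "\<dots> = (\<Prod>p\<in>prime_factors d. p)" by (rule prod.cong) (auto simp: m)
  finally show ?thesis by simp
qed

lemma mu_sq: "squarefree d \<Longrightarrow> real_of_int ((moebius_mu d)^2) = 1"
  unfolding moebius_mu_def by (simp add: power_mult_distrib[symmetric] power_even_eq[symmetric] power_mult)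

lemma T_sqf:
  fixes L2 :: real
  assumes "squarefree (d::nat)" "0 < d"
  shows "real_of_int ((moebius_mu d)^2) * real (totient d) / ((real d)^2 * L2) * (g1 d)^2
         = (\<Prod>p\<in>prime_factors d. w p) / L2"
proof -
  define P where "P = prime_factors d"
  define A where "A = (\<Prod>p\<in>P. 1 - 1 / real p)"
  define G where "G = (\<Prod>p\<in>P. (g1_prime p)^2)"
  have dP0: "d = (\<Prod>p\<in>P. p)" unfolding P_def using sqf_prod[OF assms] by simp
  have dP: "real d = (\<Prod>p\<in>P. real p)" by (subst dP0) simp
  have tot: "real (totient d) = real d * A" unfolding A_def P_def by (rule totient_formula2)
  have g: "(g1 d)^2 = G" unfolding g1_def G_def P_def by (simp add: prod_power_distrib)
  have W: "(\<Prod>p\<in>P. w p) = A * G / real d"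
    unfolding w_def A_def G_def dP by (simp add: prod.distrib prod_dividef)
  have d0: "real d \<noteq> 0" using assms by simp
  show ?thesis unfolding mu_sq[OF assms(1)] tot g P_def[symmetric] W using d0
    by (simp add: power2_eq_square field_simps)
qed

definition f2 :: "nat \<Rightarrow> real" where
  "f2 p = (if p = 2 \<or> p = 3 then 0 else 1 / real p)"

definition Bs :: "nat set \<Rightarrow> nat set set" where
  "Bs P = {B. B \<subseteq> P \<and> 2 \<notin> P - B \<and> 3 \<notin> P - B}"

lemma w_split: "w p = kk p + f2 p" unfolding kk_def f2_def by auto

lemma expand:
  assumes "finite P"
  shows "(\<Prod>p\<in>P. w p) = (\<Sum>B\<in>Bs P. (\<Prod>p\<in>B. kk p) / real (\<Prod>(P - B)))"
proof -
  have "(\<Prod>p\<in>P. w p) = (\<Prod>p\<in>P. kk p + f2 p)" by (simp add: w_split)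
  also have "\<dots> = (\<Sum>B\<in>Pow P. (\<Prod>p\<in>B. kk p) * (\<Prod>p\<in>P-B. f2 p))"
    by (rule prod_add[OF assms])
  also have "\<dots> = (\<Sum>B\<in>Bs P. (\<Prod>p\<in>B. kk p) * (\<Prod>p\<in>P-B. f2 p))"
  proof (rule sum.mono_neutral_right)
    show "finite (Pow P)" using assms by simp
    show "Bs P \<subseteq> Pow P" unfolding Bs_def by auto
    show "\<forall>B\<in>Pow P - Bs P. (\<Prod>p\<in>B. kk p) * (\<Prod>p\<in>P-B. f2 p) = 0"
    proof
      fix B assume B: "B \<in> Pow P - Bs P"
      hence "2 \<in> P - B \<or> 3 \<in> P - B" unfolding Bs_def by auto
      then obtain q where q: "q \<in> P - B" "f2 q = 0" unfolding f2_def by auto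
      have "(\<Prod>p\<in>P-B. f2 p) = 0" using q assms by (intro prod_zero) auto
      thus "(\<Prod>p\<in>B. kk p) * (\<Prod>p\<in>P-B. f2 p) = 0" by simp
    qed
  qed
  also have "\<dots> = (\<Sum>B\<in>Bs P. (\<Prod>p\<in>B. kk p) / real (\<Prod>(P - B)))"
  proof (rule sum.cong[OF refl])
    fix B assume B: "B \<in> Bs P"
    have "(\<Prod>p\<in>P-B. f2 p) = (\<Prod>p\<in>P-B. 1 / real p)"
      by (rule prod.cong[OF refl]) (use B in \<open>auto simp: Bs_def f2_def\<close>)
    also have "\<dots> = 1 / (\<Prod>p\<in>P-B. real p)" by (simp add: prod_dividef)
    also have "\<dots> = 1 / real (\<Prod>(P - B))" by simp
    finally show "(\<Prod>p\<in>B. kk p) * (\<Prod>p\<in>P-B. f2 p) = (\<Prod>p\<in>B. kk p) / real (\<Prod>(P - B))" by simp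
  qed
  finally show ?thesis .
qed


lemma T_expand:
  assumes "squarefree (d::nat)" "0 < d"
  shows "real_of_int ((moebius_mu d)^2) * real (totient d) / ((real d)^2 * (ln (x / real d))^2) * (g1 d)^2
    = (\<Sum>B\<in>Bs (prime_factors d). (\<Prod>p\<in>B. kk p) / real (\<Prod>(prime_factors d - B))
          * (1 / (ln (x / real (\<Prod>B * \<Prod>(prime_factors d - B))))^2))"
proof -
  define P where "P = prime_factors d"
  have finP: "finite P" unfolding P_def by simp
  have dB: "\<Prod>B * \<Prod>(P - B) = d" if "B \<in> Bs P" for B
  proof -
    have "B \<subseteq> P" using that unfolding Bs_def by auto
    hence "\<Prod>P = \<Prod>(P - B) * \<Prod>B" using finP by (simp add: prod.subset_diff)
    thus ?thesis using sqf_prod[OF assms] unfolding P_def by (simp add: mult.commute)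
  qed
  have "real_of_int ((moebius_mu d)^2) * real (totient d) / ((real d)^2 * (ln (x / real d))^2) * (g1 d)^2
      = (\<Prod>p\<in>P. w p) / (ln (x / real d))^2" unfolding P_def by (rule T_sqf[OF assms])
  also have "\<dots> = (\<Sum>B\<in>Bs P. (\<Prod>p\<in>B. kk p) / real (\<Prod>(P - B))) * (1 / (ln (x / real d))^2)"
    using expand[OF finP] by simp
  also have "\<dots> = (\<Sum>B\<in>Bs P. (\<Prod>p\<in>B. kk p) / real (\<Prod>(P - B)) * (1 / (ln (x / real d))^2))"
    by (rule sum_distrib_right)
  also have "\<dots> = (\<Sum>B\<in>Bs P. (\<Prod>p\<in>B. kk p) / real (\<Prod>(P - B))
          * (1 / (ln (x / real (\<Prod>B * \<Prod>(P - B))))^2))"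
    by (rule sum.cong[OF refl]) (simp only: dB)
  finally show ?thesis unfolding P_def .
qed

lemma prod_primes_pos: "(\<And>p. p \<in> B \<Longrightarrow> prime p) \<Longrightarrow> 0 < \<Prod>(B::nat set)"
  by (intro prod_pos) (auto intro: prime_gt_0_nat)

theorem mainTheorem7:
  fixes x D :: real
  assumes "0 \<le> D" and "D \<le> x"
  shows "(\<Sum>d\<in>{d::nat. 1 \<le> d \<and> real d \<le> min D (x / 10^12)}.
            real_of_int ((moebius_mu d)^2) * real (totient d)
              / ((real d)^2 * (ln (x / real d))^2) * (g1 d)^2) \<le> 0.047"
proof -
  define y where "y = min D (x / 10^12)"
  define T where "T d = real_of_int ((moebius_mu d)^2) * real (totient d)
              / ((real d)^2 * (ln (x / real d))^2) * (g1 d)^2" for d :: nat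
  define Dset where "Dset = {d::nat. 1 \<le> d \<and> real d \<le> y}"
  have goal: "(\<Sum>d\<in>Dset. T d) \<le> 0.047"
  proof (cases "1 \<le> y")
    case False
    hence "Dset = {}" unfolding Dset_def by auto
    thus ?thesis by simp
  next
    case True
    have xy: "10^12 * y \<le> x" unfolding y_def by (simp add: min_def field_simps)
    have x0: "0 < x" using xy True by simp
    have finD: "finite Dset"
    proof (rule finite_subset)
      show "Dset \<subseteq> {..nat \<lceil>y\<rceil>}"
      proof
        fix d assume "d \<in> Dset"
        hence "real d \<le> y" unfolding Dset_def by simp
        hence "int d \<le> \<lceil>y\<rceil>" using ceiling_mono[of "real d" y] by simp
        thus "d \<in> {..nat \<lceil>y\<rceil>}" by (simp add: le_nat_iff)
      qed
    qed auto
    define Fx where "Fx m = 1 / (ln (x / real m))^2" for m :: nat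
    define BS where "BS d = (if squarefree d then Bs (prime_factors d) else {})" for d :: nat
    define psi where "psi z = (snd z, \<Prod>(prime_factors (fst z) - snd z))" for z :: "nat \<times> nat set"
    define Hf where "Hf z = (\<Prod>p\<in>fst z. kk p) / real (snd z) * Fx (\<Prod>(fst z) * snd z)" for z :: "nat set \<times> nat"
    define Py where "Py = {p::nat. prime p \<and> real p \<le> y}"
    define NS where "NS B = {n::nat. 1 \<le> n \<and> coprime n 6 \<and> real (\<Prod>B) * real n \<le> y}" for B :: "nat set"
    define Z where "Z = Sigma (Pow Py) NS"
    have finPy: "finite Py"
    proof (rule finite_subset)
      show "Py \<subseteq> {..nat \<lceil>y\<rceil>}"
      proof
        fix p assume "p \<in> Py"
        hence "real p \<le> y" unfolding Py_def by simp
        hence "int p \<le> \<lceil>y\<rceil>" using ceiling_mono[of "real p" y] by simp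
        thus "p \<in> {..nat \<lceil>y\<rceil>}" by (simp add: le_nat_iff)
      qed
    qed auto
    have PyPrime: "B \<in> Pow Py \<Longrightarrow> p \<in> B \<Longrightarrow> prime p" for B p unfolding Py_def by auto
    have finNS: "finite (NS B)" if "B \<in> Pow Py" for B
    proof (rule finite_subset)
      show "NS B \<subseteq> {..nat \<lceil>y\<rceil>}"
      proof
        fix n assume "n \<in> NS B"
        hence n: "real (\<Prod>B) * real n \<le> y" unfolding NS_def by simp
        have "1 \<le> real (\<Prod>B)" using prod_primes_pos[of B] PyPrime[OF that]
          by (metis Suc_leI of_nat_1 of_nat_le_iff One_nat_def)
        hence "real n \<le> real (\<Prod>B) * real n" by (simp add: mult_le_cancel_right1)
        hence "real n \<le> y" using n by linarith
        hence "int n \<le> \<lceil>y\<rceil>" using ceiling_mono[of "real n" y] by simp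
        thus "n \<in> {..nat \<lceil>y\<rceil>}" by (simp add: le_nat_iff)
      qed
    qed auto
    have finZ: "finite Z" unfolding Z_def using finPy finNS by auto
    have finBS: "finite (BS d)" for d unfolding BS_def Bs_def by auto
    have S1: "(\<Sum>d\<in>Dset. T d) = (\<Sum>d\<in>Dset. \<Sum>B\<in>BS d. Hf (psi (d, B)))"
    proof (rule sum.cong[OF refl])
      fix d assume "d \<in> Dset"
      hence d0: "0 < d" unfolding Dset_def by simp
      show "T d = (\<Sum>B\<in>BS d. Hf (psi (d, B)))"
      proof (cases "squarefree d")
        case True
        show ?thesis unfolding T_def BS_def Hf_def psi_def Fx_def using T_expand[OF True d0, of x] True
          by (simp add: mult.commute)
      next
        case False
        hence "moebius_mu d = 0" unfolding moebius_mu_def by simp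
        thus ?thesis unfolding T_def BS_def using False by simp
      qed
    qed
    also have "\<dots> = (\<Sum>(d, B)\<in>Sigma Dset BS. Hf (psi (d, B)))"
      by (rule sum.Sigma) (use finD finBS in auto)
    also have "\<dots> = (\<Sum>z\<in>Sigma Dset BS. Hf (psi z))" by (simp add: case_prod_beta')
    also have "\<dots> = (\<Sum>w\<in>psi ` Sigma Dset BS. Hf w)"
    proof -
      have "inj_on psi (Sigma Dset BS)"
      proof (rule inj_onI)
        fix z1 z2 assume z: "z1 \<in> Sigma Dset BS" "z2 \<in> Sigma Dset BS" "psi z1 = psi z2"
        obtain d1 B1 where z1: "z1 = (d1, B1)" by force
        obtain d2 B2 where z2: "z2 = (d2, B2)" by force
        have h1: "d1 \<in> Dset" "squarefree d1" "B1 \<in> Bs (prime_factors d1)"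
          using z(1) unfolding z1 BS_def by (auto split: if_splits)
        have h2: "d2 \<in> Dset" "squarefree d2" "B2 \<in> Bs (prime_factors d2)"
          using z(2) unfolding z2 BS_def by (auto split: if_splits)
        have eq: "B1 = B2" "\<Prod>(prime_factors d1 - B1) = \<Prod>(prime_factors d2 - B2)"
          using z(3) unfolding z1 z2 psi_def by auto
        have dd: "\<Prod>B * \<Prod>(prime_factors d - B) = d" if "d \<in> Dset" "squarefree d" "B \<in> Bs (prime_factors d)" for d B
        proof -
          have "B \<subseteq> prime_factors d" using that unfolding Bs_def by auto
          hence "\<Prod>(prime_factors d) = \<Prod>(prime_factors d - B) * \<Prod>B" by (simp add: prod.subset_diff)
          moreover have "0 < d" using that unfolding Dset_def by simp
          ultimately show ?thesis using sqf_prod[OF that(2)] by (simp add: mult.commute)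
        qed
        have "d1 = d2" using dd[OF h1] dd[OF h2] eq by metis
        thus "z1 = z2" unfolding z1 z2 using eq by simp
      qed
      thus ?thesis by (simp add: sum.reindex)
    qed
    also have "\<dots> \<le> (\<Sum>w\<in>Z. Hf w)"
    proof (rule sum_mono2[OF finZ])
      show "psi ` Sigma Dset BS \<subseteq> Z"
      proof
        fix w assume "w \<in> psi ` Sigma Dset BS"
        then obtain d B where dB: "d \<in> Dset" "B \<in> BS d" and w: "w = psi (d, B)" by auto
        have sq: "squarefree d" using dB(2) unfolding BS_def by (auto split: if_splits)
        have B: "B \<subseteq> prime_factors d" "2 \<notin> prime_factors d - B" "3 \<notin> prime_factors d - B"
          using dB(2) sq unfolding BS_def Bs_def by auto
        have d0: "0 < d" "real d \<le> y" using dB(1) unfolding Dset_def by auto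
        define n where "n = \<Prod>(prime_factors d - B)"
        have dn: "\<Prod>B * n = d"
        proof -
          have "\<Prod>(prime_factors d) = \<Prod>(prime_factors d - B) * \<Prod>B" using B(1) by (simp add: prod.subset_diff)
          thus ?thesis using sqf_prod[OF sq d0(1)] unfolding n_def by (simp add: mult.commute)
        qed
        have "B \<in> Pow Py"
        proof (rule PowI, rule subsetI)
          fix p assume "p \<in> B"
          hence p: "p \<in> prime_factors d" using B by auto
          hence "prime p" "p dvd d" by auto
          hence "p \<le> d" using d0 by (simp add: dvd_imp_le)
          thus "p \<in> Py" unfolding Py_def using \<open>prime p\<close> d0 by simp
        qed
        moreover have "n \<in> NS B"
        proof -
          have "0 < n" unfolding n_def by (rule prod_primes_pos) auto
          hence n0: "1 \<le> n" by simp
          have "\<not> 2 dvd n"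
          proof
            assume "2 dvd n"
            then obtain q where "q \<in> prime_factors d - B" "2 dvd q"
              unfolding n_def using prime_dvd_prod_iff[of "prime_factors d - B" 2 id] by auto
            moreover hence "prime q" by auto
            ultimately have "q = 2" using primes_dvd_imp_eq[of 2 q] by auto
            thus False using B \<open>q \<in> prime_factors d - B\<close> by simp
          qed
          moreover have "\<not> 3 dvd n"
          proof
            assume "3 dvd n"
            then obtain q where "q \<in> prime_factors d - B" "3 dvd q"
              unfolding n_def using prime_dvd_prod_iff[of "prime_factors d - B" 3 id] by auto
            moreover hence "prime q" by auto
            ultimately have "q = 3" using primes_dvd_imp_eq[of 3 q] by auto
            thus False using B \<open>q \<in> prime_factors d - B\<close> by simp
          qed
          ultimately have "coprime n 6" using cop6 by simp
          moreover have "real (\<Prod>B) * real n \<le> y" using dn d0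
            by (metis of_nat_mult)
          ultimately show ?thesis unfolding NS_def using n0 by simp
        qed
        ultimately show "w \<in> Z" unfolding w Z_def psi_def n_def by simp
      qed
      fix w assume "w \<in> Z - psi ` Sigma Dset BS"
      show "0 \<le> Hf w"
      proof -
        from \<open>w \<in> Z - psi ` Sigma Dset BS\<close> obtain B n where w: "w = (B, n)" "B \<in> Pow Py" by (auto simp: Z_def)
        have "0 \<le> (\<Prod>p\<in>B. kk p)" using kk_nonneg PyPrime[OF w(2)] by (intro prod_nonneg) auto
        thus "0 \<le> Hf w" unfolding w Hf_def Fx_def by simp
      qed
    qed
    also have "\<dots> = (\<Sum>B\<in>Pow Py. \<Sum>n\<in>NS B. Hf (B, n))"
    proof -
      have "(\<Sum>B\<in>Pow Py. \<Sum>n\<in>NS B. Hf (B, n)) = (\<Sum>(B, n)\<in>Sigma (Pow Py) NS. Hf (B, n))"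
        by (rule sum.Sigma) (use finPy finNS in auto)
      also have "\<dots> = (\<Sum>w\<in>Z. Hf w)" unfolding Z_def by (simp add: case_prod_beta')
      finally show ?thesis by simp
    qed
    also have "\<dots> \<le> (\<Sum>B\<in>Pow Py. (\<Prod>p\<in>B. kk p) * (1/81))"
    proof (rule sum_mono)
      fix B assume B: "B \<in> Pow Py"
      define m where "m = \<Prod>B"
      have "0 < m" unfolding m_def by (rule prod_primes_pos) (use PyPrime[OF B] in auto)
      hence m0: "0 < real m" by (simp only: of_nat_0_less_iff)
      have K0: "0 \<le> (\<Prod>p\<in>B. kk p)" using kk_nonneg PyPrime[OF B] by (intro prod_nonneg) auto
      define N where "N = y / real m"
      define X where "X = x / real m"
      have NSeq: "NS B = {n::nat. 1 \<le> n \<and> coprime n 6 \<and> real n \<le> N}"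
        unfolding NS_def N_def m_def[symmetric] using m0 by (auto simp: field_simps)
      have Hf_eq: "Hf (B, n) = (\<Prod>p\<in>B. kk p) * (1/(real n * (ln (X/real n))^2))" for n
      proof -
        have mB: "real m = prod real B" unfolding m_def by simp
        show ?thesis unfolding Hf_def Fx_def X_def mB by (simp add: divide_divide_eq_left mult.commute)
      qed
      have "(\<Sum>n\<in>NS B. 1/(real n * (ln (X/real n))^2)) \<le> 1/81"
      proof (cases "1 \<le> N")
        case True
        have X0: "0 < X" unfolding X_def using x0 m0 by simp
        have XN: "10^12 * N \<le> X" unfolding X_def N_def using xy m0 by (simp add: field_simps)
        have "(\<Sum>n\<in>NS B. 1/(real n * (ln (X/real n))^2)) \<le> 1/(3 * ln (X/N))"
          unfolding NSeq by (rule inner[OF X0 True XN])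
        also have "X / N = x / y" unfolding X_def N_def using m0 by simp
        also have "1/(3 * ln (x/y)) \<le> 1/81"
        proof -
          have "10^12 \<le> x / y" using xy \<open>1 \<le> y\<close> by (simp add: field_simps)
          hence "27 \<le> ln (x/y)" by (rule ln_ge27)
          thus ?thesis by (simp add: field_simps)
        qed
        finally show ?thesis .
      next
        case False
        hence "NS B = {}" unfolding NSeq by auto
        thus ?thesis by simp
      qed
      hence "(\<Prod>p\<in>B. kk p) * (\<Sum>n\<in>NS B. 1/(real n * (ln (X/real n))^2)) \<le> (\<Prod>p\<in>B. kk p) * (1/81)"
        using K0 by (rule mult_left_mono)
      thus "(\<Sum>n\<in>NS B. Hf (B, n)) \<le> (\<Prod>p\<in>B. kk p) * (1/81)"
        unfolding Hf_eq by (simp add: sum_distrib_left)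
    qed
    also have "\<dots> = (1/81) * (\<Prod>p\<in>Py. 1 + kk p)"
    proof -
      have "(\<Prod>p\<in>Py. kk p + 1) = (\<Sum>B\<in>Pow Py. (\<Prod>p\<in>B. kk p) * (\<Prod>p\<in>Py - B. 1))"
        by (rule prod_add[OF finPy])
      thus ?thesis by (simp add: sum_distrib_right add.commute mult.commute sum_divide_distrib[symmetric])
    qed
    also have "\<dots> \<le> (1/81) * (374/100)"
      using prod_bound[of y] unfolding Py_def by simp
    also have "\<dots> \<le> 0.047" by simp
    finally show ?thesis .
  qed
  thus ?thesis unfolding T_def Dset_def y_def .
qed

end
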